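(* Let $p$ be $(12,\emptyset,\{0,1\})$ or $(12,\emptyset,\{0,2\})$, or any pattern in the same symmetry class as one of these. Then for all $n\ge2$, $a_n(p)=n!/2$.
   Context: For $n\ge1$, $\mathcal S_n$ is the set of permutations $\pi=\pi_1\cdots\pi_n$ of $[n]$. A bi-vincular pattern of length $k$ is a triple $p=(\sigma,X,Y)$ with $\sigma\in\mathcal S_k$ and $X,Y\subseteq\{0,1,\dots,k\}$. A permutation $\pi\in\mathcal S_n$ contains $p$ if there are indices $1\le i_1<\dots<i_k\le n$ such that $(\pi_{i_1},\dots,\pi_{i_k})$ is order-isomorphic to $\sigma$ and, letting $j_1<\dots<j_k$ be the values $\pi_{i_1},\dots,\pi_{i_k}$ sorted increasingly and setting $i_0=j_0=0$, $i_{k+1}=j_{k+1}=n+1$, one has $i_{x+1}=i_x+1$ for all $x\in X$ and $j_{y+1}=j_y+1$ for all $y\in Y$. Otherwise $\pi$ avoids $p$; $a_n(p)$ is the number of $\pi\in\mathcal S_n$ avoiding $p$. Symmetries: $p^{i}=(\sigma^{-1},Y,X)$, $p^{r}=(\sigma^{r},\{k-x:x\in X\},Y)$, $p^{c}=(\sigma^{c},X,\{k-y:y\in Y\})$ with $\sigma^r_j=\sigma_{k+1-j}$, $\sigma^c_j=k+1-\sigma_j$; the symmetry class of $p$ consists of all patterns obtained from $p$ by finitely many applications of these maps. *)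

theory Defs
  imports Main
begin

(* Permutations of [n] in one-line notation, as lists: pi ! (j-1) is pi_j. *)
definition perms :: "nat \<Rightarrow> nat list set" where
  "perms n = {\<pi>. distinct \<pi> \<and> set \<pi> = {1..n}}"

type_synonym bvpat = "nat list \<times> nat set \<times> nat set"

definition is_bvpat :: "bvpat \<Rightarrow> bool" where
  "is_bvpat p = (case p of (\<sigma>, X, Y) \<Rightarrow>
     \<sigma> \<in> perms (length \<sigma>) \<and> X \<subseteq> {0..length \<sigma>} \<and> Y \<subseteq> {0..length \<sigma>})"

definition ext_seq :: "nat \<Rightarrow> nat list \<Rightarrow> nat \<Rightarrow> nat" where
  "ext_seq n xs x = (if x = 0 then 0 else if x = Suc (length xs) then n + 1 else xs ! (x - 1))"

definition contains :: "nat list \<Rightarrow> bvpat \<Rightarrow> bool" where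
  "contains \<pi> p = (case p of (\<sigma>, X, Y) \<Rightarrow>
     (let n = length \<pi>; k = length \<sigma> in
      \<exists>is. length is = k \<and> sorted_wrt (<) is \<and> set is \<subseteq> {1..n} \<and>
        (\<forall>a<k. \<forall>b<k. (\<pi> ! (is ! a - 1) < \<pi> ! (is ! b - 1)) \<longleftrightarrow> (\<sigma> ! a < \<sigma> ! b)) \<and>
        (let js = sort (map (\<lambda>a. \<pi> ! (is ! a - 1)) [0..<k]) in
          (\<forall>x\<in>X. ext_seq n is (x + 1) = ext_seq n is x + 1) \<and>
          (\<forall>y\<in>Y. ext_seq n js (y + 1) = ext_seq n js y + 1))))"

definition avoids :: "nat list \<Rightarrow> bvpat \<Rightarrow> bool" where
  "avoids \<pi> p = (\<not> contains \<pi> p)"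

definition av_count :: "nat \<Rightarrow> bvpat \<Rightarrow> nat" where
  "av_count n p = card {\<pi> \<in> perms n. avoids \<pi> p}"

definition perm_inv :: "nat list \<Rightarrow> nat list" where
  "perm_inv \<sigma> = map (\<lambda>v. Suc (THE a. a < length \<sigma> \<and> \<sigma> ! a = v)) [1..<Suc (length \<sigma>)]"

definition pat_i :: "bvpat \<Rightarrow> bvpat" where
  "pat_i p = (case p of (\<sigma>, X, Y) \<Rightarrow> (perm_inv \<sigma>, Y, X))"

definition pat_r :: "bvpat \<Rightarrow> bvpat" where
  "pat_r p = (case p of (\<sigma>, X, Y) \<Rightarrow> (rev \<sigma>, (\<lambda>x. length \<sigma> - x) ` X, Y))"

definition pat_c :: "bvpat \<Rightarrow> bvpat" where
  "pat_c p = (case p of (\<sigma>, X, Y) \<Rightarrow>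
     (map (\<lambda>v. Suc (length \<sigma>) - v) \<sigma>, X, (\<lambda>y. length \<sigma> - y) ` Y))"

inductive_set sym_class :: "bvpat \<Rightarrow> bvpat set" for p :: bvpat where
  base: "p \<in> sym_class p"
| inv: "q \<in> sym_class p \<Longrightarrow> pat_i q \<in> sym_class p"
| rev: "q \<in> sym_class p \<Longrightarrow> pat_r q \<in> sym_class p"
| comp: "q \<in> sym_class p \<Longrightarrow> pat_c q \<in> sym_class p"

end

theory Submission
  imports Defs "HOL-Combinatorics.Multiset_Permutations"
begin


lemma perm_inv_12: "perm_inv [1,2] = [1,2]"
proof -
  have a: "(THE a. a < Suc (Suc 0) \<and> [Suc 0,Suc (Suc 0)] ! a = Suc 0) = 0"
    by (rule the_equality) (auto simp: less_Suc_eq)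
  have b: "(THE a. a < Suc (Suc 0) \<and> [Suc 0,Suc (Suc 0)] ! a = Suc (Suc 0)) = 1"
    by (rule the_equality) (auto simp: less_Suc_eq)
  show ?thesis unfolding perm_inv_def using a b by (simp add: upt_rec numeral_2_eq_2)
qed

lemma perm_inv_21: "perm_inv [2,1] = [2,1]"
proof -
  have a: "(THE a. a < Suc (Suc 0) \<and> [Suc (Suc 0), Suc 0] ! a = Suc 0) = 1"
    by (rule the_equality) (auto simp: less_Suc_eq)
  have b: "(THE a. a < Suc (Suc 0) \<and> [Suc (Suc 0), Suc 0] ! a = Suc (Suc 0)) = 0"
    by (rule the_equality) (auto simp: less_Suc_eq)
  show ?thesis unfolding perm_inv_def using a b by (simp add: upt_rec numeral_2_eq_2)
qed

lemmas perm_inv_12' = perm_inv_12[simplified]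
lemmas perm_inv_21' = perm_inv_21[simplified]

definition C1 :: "bvpat set" where
  "C1 = {(s,X,Y). (s = [1,2] \<or> s = [2,1]) \<and>
     ((X = {} \<and> (Y = {0,1} \<or> Y = {1,2})) \<or> (Y = {} \<and> (X = {0,1} \<or> X = {1,2})))}"

definition C2 :: "bvpat set" where
  "C2 = {(s,X,Y). (s = [1,2] \<or> s = [2,1]) \<and> ((X = {} \<and> Y = {0,2}) \<or> (Y = {} \<and> X = {0,2}))}"

lemma img1: "(\<lambda>x::nat. 2 - x) ` {0,1} = {1,2}" "(\<lambda>x::nat. 2 - x) ` {1,2} = {0,1}"
   "(\<lambda>x::nat. 2 - x) ` {0,2} = {0,2}" by auto

lemma C1_i: "q \<in> C1 \<Longrightarrow> pat_i q \<in> C1"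
  unfolding C1_def pat_i_def
  by (clarsimp simp: perm_inv_12' perm_inv_21') (elim disjE; simp add: perm_inv_12' perm_inv_21')
lemma C1_r: "q \<in> C1 \<Longrightarrow> pat_r q \<in> C1"
  unfolding C1_def pat_r_def
  by clarsimp (elim disjE; auto simp: img1 numeral_2_eq_2)
lemma C1_c: "q \<in> C1 \<Longrightarrow> pat_c q \<in> C1"
  unfolding C1_def pat_c_def
  by clarsimp (elim disjE; auto simp: img1 numeral_2_eq_2)
lemma C2_i: "q \<in> C2 \<Longrightarrow> pat_i q \<in> C2"
  unfolding C2_def pat_i_def
  by (clarsimp simp: perm_inv_12' perm_inv_21') (elim disjE; simp add: perm_inv_12' perm_inv_21')
lemma C2_r: "q \<in> C2 \<Longrightarrow> pat_r q \<in> C2"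
  unfolding C2_def pat_r_def
  by clarsimp (elim disjE; auto simp: img1 numeral_2_eq_2)
lemma C2_c: "q \<in> C2 \<Longrightarrow> pat_c q \<in> C2"
  unfolding C2_def pat_c_def
  by clarsimp (elim disjE; auto simp: img1 numeral_2_eq_2)

lemma C1_closed: "q \<in> sym_class ([1,2], {}, {0,1}) \<Longrightarrow> q \<in> C1"
  by (induction rule: sym_class.induct) (simp add: C1_def, erule C1_i, erule C1_r, erule C1_c)

lemma C2_closed: "q \<in> sym_class ([1,2], {}, {0,2}) \<Longrightarrow> q \<in> C2"
  by (induction rule: sym_class.induct) (simp add: C2_def, erule C2_i, erule C2_r, erule C2_c)



definition before :: "nat list \<Rightarrow> nat \<Rightarrow> nat \<Rightarrow> bool" where
  "before \<pi> a b = (\<exists>i1 i2. 1 \<le> i1 \<and> i1 < i2 \<and> i2 \<le> length \<pi> \<and> \<pi>!(i1-1) = a \<and> \<pi>!(i2-1) = b)"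

lemma card_perms: "card (perms n) = fact n"
proof -
  have "perms n = permutations_of_set {1..n}"
    unfolding perms_def permutations_of_set_def by auto
  then show ?thesis by simp
qed

lemma finite_perms: "finite (perms n)"
proof -
  have "perms n = permutations_of_set {1..n}"
    unfolding perms_def permutations_of_set_def by auto
  then show ?thesis by simp
qed

lemma inv_count:
  assumes fin: "finite S" and img: "\<And>x. x \<in> S \<Longrightarrow> f x \<in> S"
    and inv: "\<And>x. x \<in> S \<Longrightarrow> f (f x) = x"
    and flip: "\<And>x. x \<in> S \<Longrightarrow> P (f x) \<longleftrightarrow> \<not> P x"
  shows "card {x\<in>S. P x} = card S div 2"
proof -
  let ?A = "{x\<in>S. P x}" and ?B = "{x\<in>S. \<not> P x}"
  have "bij_betw f ?A ?B"
  proof (rule bij_betw_byWitness[where f' = f])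
    show "\<forall>a\<in>?A. f (f a) = a" using inv by auto
    show "\<forall>a\<in>?B. f (f a) = a" using inv by auto
    show "f ` ?A \<subseteq> ?B" using img flip by auto
    show "f ` ?B \<subseteq> ?A" using img flip by auto
  qed
  then have e: "card ?A = card ?B" by (rule bij_betw_same_card)
  have "S = ?A \<union> ?B" by auto
  then have "card S = card ?A + card ?B"
    using fin by (metis (no_types, lifting) card_Un_disjoint disjoint_iff finite_Un mem_Collect_eq)
  then show ?thesis using e by simp
qed

definition sw :: "nat \<Rightarrow> nat \<Rightarrow> nat \<Rightarrow> nat" where
  "sw a b x = (if x = a then b else if x = b then a else x)"

lemma swsw[simp]: "sw a b (sw a b x) = x" by (simp add: sw_def)

lemma before_map_sw: "a \<noteq> b \<Longrightarrow> before (map (sw a b) \<pi>) a b = before \<pi> b a"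
  unfolding before_def by (intro iff_exI) (auto simp: sw_def split: if_splits)

lemma before_flip:
  assumes "distinct \<pi>" "a \<in> set \<pi>" "b \<in> set \<pi>" "a \<noteq> b"
  shows "before \<pi> b a \<longleftrightarrow> \<not> before \<pi> a b"
proof -
  obtain ia where ia: "ia < length \<pi>" "\<pi>!ia = a" using assms(2) by (auto simp: in_set_conv_nth)
  obtain ib where ib: "ib < length \<pi>" "\<pi>!ib = b" using assms(3) by (auto simp: in_set_conv_nth)
  have ne: "ia \<noteq> ib" using ia ib assms(4) by auto
  have key: "\<And>i v. i < length \<pi> \<Longrightarrow> \<pi>!i = v \<Longrightarrow> (v = a \<longrightarrow> i = ia) \<and> (v = b \<longrightarrow> i = ib)"
    using ia ib assms(1) by (auto simp: nth_eq_iff_index_eq)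
  have ab: "before \<pi> a b \<longleftrightarrow> ia < ib"
  proof
    assume "before \<pi> a b"
    then obtain i1 i2 where h: "1 \<le> i1" "i1 < i2" "i2 \<le> length \<pi>" "\<pi>!(i1-1) = a" "\<pi>!(i2-1) = b"
      unfolding before_def by blast
    have "i1 - 1 = ia" using key[of "i1-1" a] h by auto
    moreover have "i2 - 1 = ib" using key[of "i2-1" b] h by auto
    ultimately show "ia < ib" using h by auto
  next
    assume "ia < ib" then show "before \<pi> a b" unfolding before_def
      using ia ib by (intro exI[of _ "Suc ia"] exI[of _ "Suc ib"]) auto
  qed
  have ba: "before \<pi> b a \<longleftrightarrow> ib < ia"
  proof
    assume "before \<pi> b a"
    then obtain i1 i2 where h: "1 \<le> i1" "i1 < i2" "i2 \<le> length \<pi>" "\<pi>!(i1-1) = b" "\<pi>!(i2-1) = a"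
      unfolding before_def by blast
    have "i1 - 1 = ib" using key[of "i1-1" b] h by auto
    moreover have "i2 - 1 = ia" using key[of "i2-1" a] h by auto
    ultimately show "ib < ia" using h by auto
  next
    assume "ib < ia" then show "before \<pi> b a" unfolding before_def
      using ia ib by (intro exI[of _ "Suc ib"] exI[of _ "Suc ia"]) auto
  qed
  show ?thesis using ab ba ne by auto
qed

lemma count_before:
  assumes "a \<noteq> b" "a \<in> {1..n}" "b \<in> {1..n}"
  shows "card {\<pi> \<in> perms n. \<not> before \<pi> a b} = fact n div 2"
proof -
  have sws: "sw a b ` {1..n} = {1..n}" using assms by (auto simp: sw_def image_iff)
  have swi: "inj (sw a b)" unfolding inj_def sw_def by auto
  have "card {\<pi> \<in> perms n. \<not> before \<pi> a b} = card (perms n) div 2"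
  proof (rule inv_count[where f = "map (sw a b)"])
    show "finite (perms n)" by (rule finite_perms)
    fix \<pi> assume p: "\<pi> \<in> perms n"
    show "map (sw a b) \<pi> \<in> perms n" using p sws swi
      unfolding perms_def by (auto simp: distinct_map inj_on_def inj_def)
    show "map (sw a b) (map (sw a b) \<pi>) = \<pi>" by (simp add: comp_def)
    show "(\<not> before (map (sw a b) \<pi>) a b) \<longleftrightarrow> \<not> \<not> before \<pi> a b"
      using p assms before_flip[of \<pi> a b] by (auto simp: before_map_sw perms_def)
  qed
  then show ?thesis by (simp add: card_perms)
qed

lemma count_pos:
  assumes "i \<noteq> j" "i < n" "j < n"
  shows "card {\<pi> \<in> perms n. \<not> \<pi>!i < \<pi>!j} = fact n div 2"
proof -
  have len: "\<pi> \<in> perms n \<Longrightarrow> length \<pi> = n" for \<pi>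
    using distinct_card[of \<pi>] unfolding perms_def by auto
  have "card {\<pi> \<in> perms n. \<not> \<pi>!i < \<pi>!j} = card (perms n) div 2"
  proof (rule inv_count[where f = "\<lambda>\<pi>. \<pi>[i := \<pi>!j, j := \<pi>!i]"])
    show "finite (perms n)" by (rule finite_perms)
    fix \<pi> assume p: "\<pi> \<in> perms n"
    have l: "length \<pi> = n" using len p by auto
    show "\<pi>[i := \<pi>!j, j := \<pi>!i] \<in> perms n" using p l assms
      unfolding perms_def by simp
    show "(\<pi>[i := \<pi>!j, j := \<pi>!i])[i := (\<pi>[i := \<pi>!j, j := \<pi>!i])!j, j := (\<pi>[i := \<pi>!j, j := \<pi>!i])!i] = \<pi>"
      using l assms by (intro nth_equalityI) (simp_all add: nth_list_update)
    have d: "\<pi>!i \<noteq> \<pi>!j" using p l assms unfolding perms_def by (auto simp: nth_eq_iff_index_eq)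
    show "(\<not> (\<pi>[i := \<pi>!j, j := \<pi>!i])!i < (\<pi>[i := \<pi>!j, j := \<pi>!i])!j) \<longleftrightarrow> \<not> \<not> \<pi>!i < \<pi>!j"
      using l assms d by (simp add: nth_list_update) linarith
  qed
  then show ?thesis by (simp add: card_perms)
qed


lemma ex_len2: "(\<exists>xs. length xs = 2 \<and> P xs) \<longleftrightarrow> (\<exists>a b. P [a,b])"
proof
  assume "\<exists>xs. length xs = 2 \<and> P xs"
  then obtain xs where "length xs = 2" "P xs" by blast
  then show "\<exists>a b. P [a,b]" by (cases xs; cases "tl xs"; auto simp: numeral_2_eq_2)
qed force

lemma all_less2: "(\<forall>a<(2::nat). P a) \<longleftrightarrow> P 0 \<and> P 1"
  by (auto simp: numeral_2_eq_2 less_Suc_eq)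

lemma contains2:
  assumes "length \<sigma> = 2"
  shows "contains \<pi> (\<sigma>,X,Y) \<longleftrightarrow> (\<exists>i1 i2. 1 \<le> i1 \<and> i1 < i2 \<and> i2 \<le> length \<pi> \<and>
    (\<pi>!(i1-1) < \<pi>!(i2-1) \<longleftrightarrow> \<sigma>!0 < \<sigma>!1) \<and> (\<pi>!(i2-1) < \<pi>!(i1-1) \<longleftrightarrow> \<sigma>!1 < \<sigma>!0) \<and>
    (\<forall>x\<in>X. ext_seq (length \<pi>) [i1,i2] (x + 1) = ext_seq (length \<pi>) [i1,i2] x + 1) \<and>
    (\<forall>y\<in>Y. ext_seq (length \<pi>) (sort [\<pi>!(i1-1), \<pi>!(i2-1)]) (y + 1) =
             ext_seq (length \<pi>) (sort [\<pi>!(i1-1), \<pi>!(i2-1)]) y + 1))"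
proof -
  have m: "map f [0..<2] = [f 0, f 1]" for f :: "nat \<Rightarrow> nat"
    by (simp add: numeral_2_eq_2 upt_rec)
  show ?thesis
    unfolding contains_def using assms
    apply (simp only: prod.case Let_def ex_len2 m)
    apply (simp add: all_less2)
    apply (intro iff_exI)
    apply auto
    done
qed

lemma Y01a: "contains \<pi> ([1,2],{},{0,1}) \<longleftrightarrow> before \<pi> 1 2"
  unfolding before_def by (subst contains2, simp, intro iff_exI) (auto simp: ext_seq_def)
lemma Y01b: "contains \<pi> ([2,1],{},{0,1}) \<longleftrightarrow> before \<pi> 2 1"
  unfolding before_def by (subst contains2, simp, intro iff_exI) (auto simp: ext_seq_def)
lemma Y12a: "length \<pi> \<ge> 2 \<Longrightarrow> contains \<pi> ([1,2],{},{1,2}) \<longleftrightarrow> before \<pi> (length \<pi> - 1) (length \<pi>)"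
  unfolding before_def by (subst contains2, simp, intro iff_exI) (auto simp: ext_seq_def)
lemma Y12b: "length \<pi> \<ge> 2 \<Longrightarrow> contains \<pi> ([2,1],{},{1,2}) \<longleftrightarrow> before \<pi> (length \<pi>) (length \<pi> - 1)"
  unfolding before_def by (subst contains2, simp, intro iff_exI) (auto simp: ext_seq_def)
lemma Y02a: "length \<pi> \<ge> 2 \<Longrightarrow> contains \<pi> ([1,2],{},{0,2}) \<longleftrightarrow> before \<pi> 1 (length \<pi>)"
  unfolding before_def by (subst contains2, simp, intro iff_exI) (auto simp: ext_seq_def)
lemma Y02b: "length \<pi> \<ge> 2 \<Longrightarrow> contains \<pi> ([2,1],{},{0,2}) \<longleftrightarrow> before \<pi> (length \<pi>) 1"
  unfolding before_def by (subst contains2, simp, intro iff_exI) (auto simp: ext_seq_def)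

lemma X01a: "length \<pi> \<ge> 2 \<Longrightarrow> contains \<pi> ([1,2],{0,1},{}) \<longleftrightarrow> \<pi>!0 < \<pi>!1"
  apply (subst contains2, simp) apply (rule iffI) apply (auto simp: ext_seq_def)[1]
  by (rule exI[of _ "1"], rule exI[of _ "2"]) (auto simp: ext_seq_def numeral_2_eq_2)
lemma X01b: "length \<pi> \<ge> 2 \<Longrightarrow> contains \<pi> ([2,1],{0,1},{}) \<longleftrightarrow> \<pi>!1 < \<pi>!0"
  apply (subst contains2, simp) apply (rule iffI) apply (auto simp: ext_seq_def)[1]
  by (rule exI[of _ "1"], rule exI[of _ "2"]) (auto simp: ext_seq_def numeral_2_eq_2)
lemma X12a: "length \<pi> \<ge> 2 \<Longrightarrow> contains \<pi> ([1,2],{1,2},{}) \<longleftrightarrow> \<pi>!(length \<pi> - 2) < \<pi>!(length \<pi> - 1)"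
  apply (subst contains2, simp) apply (rule iffI) apply (auto simp: ext_seq_def)[1]
  by (rule exI[of _ "length \<pi> - 1"], rule exI[of _ "length \<pi>"]) (auto simp: ext_seq_def numeral_2_eq_2)
lemma X12b: "length \<pi> \<ge> 2 \<Longrightarrow> contains \<pi> ([2,1],{1,2},{}) \<longleftrightarrow> \<pi>!(length \<pi> - 1) < \<pi>!(length \<pi> - 2)"
  apply (subst contains2, simp) apply (rule iffI) apply (auto simp: ext_seq_def)[1]
  by (rule exI[of _ "length \<pi> - 1"], rule exI[of _ "length \<pi>"]) (auto simp: ext_seq_def numeral_2_eq_2)
lemma X02a: "length \<pi> \<ge> 2 \<Longrightarrow> contains \<pi> ([1,2],{0,2},{}) \<longleftrightarrow> \<pi>!0 < \<pi>!(length \<pi> - 1)"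
  apply (subst contains2, simp) apply (rule iffI) apply (auto simp: ext_seq_def)[1]
  by (rule exI[of _ "1"], rule exI[of _ "length \<pi>"]) (auto simp: ext_seq_def numeral_2_eq_2)
lemma X02b: "length \<pi> \<ge> 2 \<Longrightarrow> contains \<pi> ([2,1],{0,2},{}) \<longleftrightarrow> \<pi>!(length \<pi> - 1) < \<pi>!0"
  apply (subst contains2, simp) apply (rule iffI) apply (auto simp: ext_seq_def)[1]
  by (rule exI[of _ "1"], rule exI[of _ "length \<pi>"]) (auto simp: ext_seq_def numeral_2_eq_2)



lemma perms_len: "\<pi> \<in> perms n \<Longrightarrow> length \<pi> = n"
  using distinct_card[of \<pi>] unfolding perms_def by auto

lemma cnt_b:
  assumes "\<And>\<pi>. \<pi> \<in> perms n \<Longrightarrow> contains \<pi> p \<longleftrightarrow> before \<pi> a b"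
    "a \<noteq> b" "a \<in> {1..n}" "b \<in> {1..n}"
  shows "av_count n p = fact n div 2"
proof -
  have "{\<pi> \<in> perms n. avoids \<pi> p} = {\<pi> \<in> perms n. \<not> before \<pi> a b}"
    using assms(1) unfolding avoids_def by auto
  then show ?thesis unfolding av_count_def using count_before[OF assms(2-4)] by simp
qed

lemma cnt_p:
  assumes "\<And>\<pi>. \<pi> \<in> perms n \<Longrightarrow> contains \<pi> p \<longleftrightarrow> \<pi>!i < \<pi>!j"
    "i \<noteq> j" "i < n" "j < n"
  shows "av_count n p = fact n div 2"
proof -
  have "{\<pi> \<in> perms n. avoids \<pi> p} = {\<pi> \<in> perms n. \<not> \<pi>!i < \<pi>!j}"
    using assms(1) unfolding avoids_def by auto
  then show ?thesis unfolding av_count_def using count_pos[OF assms(2-4)] by simp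
qed

theorem mainTheorem3:
  fixes p :: bvpat and n :: nat
  assumes "p \<in> sym_class ([1,2], {}, {0,1}) \<or> p \<in> sym_class ([1,2], {}, {0,2})"
    and "n \<ge> 2"
  shows "av_count n p = fact n div 2"
proof -
  have n2: "2 \<le> n" by fact
  have L: "\<And>\<pi>. \<pi> \<in> perms n \<Longrightarrow> length \<pi> = n \<and> 2 \<le> length \<pi>" using perms_len n2 by auto
  have "p \<in> C1 \<or> p \<in> C2" using assms(1) C1_closed C2_closed by blast
  then have "p \<in> {([1,2],{},{0,1}), ([2,1],{},{0,1}), ([1,2],{},{1,2}), ([2,1],{},{1,2}),
                   ([1,2],{0,1},{}), ([2,1],{0,1},{}), ([1,2],{1,2},{}), ([2,1],{1,2},{}),
                   ([1,2],{},{0,2}), ([2,1],{},{0,2}), ([1,2],{0,2},{}), ([2,1],{0,2},{})}"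
    unfolding C1_def C2_def by auto
  then show ?thesis
  proof (elim insertE emptyE)
    assume "p = ([1,2],{},{0,1})" then show ?thesis
      by - (rule cnt_b[of _ _ 1 2], use L Y01a n2 in auto)
  next
    assume "p = ([2,1],{},{0,1})" then show ?thesis
      by - (rule cnt_b[of _ _ 2 1], use L Y01b n2 in auto)
  next
    assume "p = ([1,2],{},{1,2})" then show ?thesis
      by - (rule cnt_b[of _ _ "n-1" n], use L Y12a n2 in auto)
  next
    assume "p = ([2,1],{},{1,2})" then show ?thesis
      by - (rule cnt_b[of _ _ n "n-1"], use L Y12b n2 in auto)
  next
    assume "p = ([1,2],{0,1},{})" then show ?thesis
      by - (rule cnt_p[of _ _ 0 1], use L X01a n2 in auto)
  next
    assume "p = ([2,1],{0,1},{})" then show ?thesis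
      by - (rule cnt_p[of _ _ 1 0], use L X01b n2 in auto)
  next
    assume "p = ([1,2],{1,2},{})" then show ?thesis
      by - (rule cnt_p[of _ _ "n-2" "n-1"], use L X12a n2 in auto)
  next
    assume "p = ([2,1],{1,2},{})" then show ?thesis
      by - (rule cnt_p[of _ _ "n-1" "n-2"], use L X12b n2 in auto)
  next
    assume "p = ([1,2],{},{0,2})" then show ?thesis
      by - (rule cnt_b[of _ _ 1 n], use L Y02a n2 in auto)
  next
    assume "p = ([2,1],{},{0,2})" then show ?thesis
      by - (rule cnt_b[of _ _ n 1], use L Y02b n2 in auto)
  next
    assume "p = ([1,2],{0,2},{})" then show ?thesis
      by - (rule cnt_p[of _ _ 0 "n-1"], use L X02a n2 in auto)
  next
    assume "p = ([2,1],{0,2},{})" then show ?thesis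
      by - (rule cnt_p[of _ _ "n-1" 0], use L X02b n2 in auto)
  qed
qed

end
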